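(* Let $S(n)=(3n+1)/2^{v_2(3n+1)}$ be the odd-to-odd Syracuse map. Let $n=64q+57$ with $q\equiv 3\pmod 8$, and write $q=8m+3$ ($m\ge 0$ an integer), so $n=512m+249$. Then $S^k(n)\not\equiv 57\pmod{64}$ for $k=1,2,3,4$. Consequently, the minimum number of odd-to-odd steps needed to return to the residue class $57\bmod 64$ from this branch is at least $5$.
   Context: $v_2$ is the $2$-adic valuation; $S^k$ is the $k$-th iterate. *)

theory Defs
  imports "HOL-Computational_Algebra.Primes"
begin

definition v2 :: "nat \<Rightarrow> nat" where
  "v2 x = multiplicity (2::nat) x"

definition syracuse :: "nat \<Rightarrow> nat" where
  "syracuse n = (3 * n + 1) div 2 ^ v2 (3 * n + 1)"

end

theory Submission
  imports Defs
begin

lemma syr_step: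
  assumes "3 * n + 1 = 2 ^ j * (r::nat)" and "odd r"
  shows "syracuse n = r"
proof -
  have "\<not> 2 ^ Suc j dvd 2 ^ j * r"
  proof
    assume "2 ^ Suc j dvd 2 ^ j * r"
    then have "2 ^ j * 2 dvd 2 ^ j * r" by (simp add: mult.commute)
    then have "2 dvd r" by (simp add: nat_mult_dvd_cancel_disj)
    with assms(2) show False by simp
  qed
  then have "v2 (3 * n + 1) = j" unfolding v2_def assms(1)
    by (intro multiplicity_eqI) auto
  then show ?thesis unfolding syracuse_def assms(1) by simp
qed

theorem mainTheorem7:
  fixes m q n :: nat
  assumes "n = 64 * q + 57" and "q mod 8 = 3" and "q = 8 * m + 3"
  shows "n = 512 * m + 249
    \<and> (\<forall>k\<in>{1..4::nat}. (syracuse ^^ k) n mod 64 \<noteq> 57)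
    \<and> (\<forall>k::nat. 0 < k \<and> (syracuse ^^ k) n mod 64 = 57 \<longrightarrow> 5 \<le> k)"
proof -
  have n: "n = 512 * m + 249" using assms by simp
  have s1: "syracuse n = 384*m+187" by (rule syr_step[where j=2]) (simp_all add: n)
  have s2: "syracuse (384*m+187) = 576*m+281" by (rule syr_step[where j=1]) simp_all
  have s3: "syracuse (576*m+281) = 432*m+211" by (rule syr_step[where j=2]) simp_all
  have s4: "syracuse (432*m+211) = 648*m+317" by (rule syr_step[where j=1]) simp_all
  have f1: "(syracuse ^^ 1) n = 384*m+187" using s1 by simp
  have f2: "(syracuse ^^ 2) n = 576*m+281" using s1 s2 by (simp add: numeral_eq_Suc)
  have f3: "(syracuse ^^ 3) n = 432*m+211" using s1 s2 s3 by (simp add: numeral_eq_Suc)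
  have f4: "(syracuse ^^ 4) n = 648*m+317" using s1 s2 s3 s4 by (simp add: numeral_eq_Suc)
  have m8: "x mod 8 = 1" if "x mod 64 = 57" for x :: nat
  proof -
    have "x mod 8 = x mod 64 mod 8" by (simp add: mod_mod_cancel)
    with that show ?thesis by simp
  qed
  have e1: "(384*m+187::nat) = 8*(48*m+23)+3" by simp
  have e2: "(576*m+281::nat) = 64*(9*m+4)+25" by simp
  have e3: "(432*m+211::nat) = 8*(54*m+26)+3" by simp
  have e4: "(648*m+317::nat) = 8*(81*m+39)+5" by simp
  have g1: "(384*m+187::nat) mod 8 = 3" by presburger
  have g2: "(576*m+281::nat) mod 64 = 25" by presburger
  have g3: "(432*m+211::nat) mod 8 = 3" by presburger
  have g4: "(648*m+317::nat) mod 8 = 5" by presburger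
  have A: "\<forall>k\<in>{1..4::nat}. (syracuse ^^ k) n mod 64 \<noteq> 57"
  proof
    fix k :: nat assume "k \<in> {1..4}"
    then have "k = 1 \<or> k = 2 \<or> k = 3 \<or> k = 4" by auto
    then show "(syracuse ^^ k) n mod 64 \<noteq> 57"
    proof (elim disjE)
      assume "k = 1" then show ?thesis using f1 g1 m8 by fastforce
    next
      assume "k = 2" then show ?thesis using f2 g2 by simp
    next
      assume "k = 3" then show ?thesis using f3 g3 m8 by fastforce
    next
      assume "k = 4" then show ?thesis using f4 g4 m8 by fastforce
    qed
  qed
  moreover have "\<forall>k::nat. 0 < k \<and> (syracuse ^^ k) n mod 64 = 57 \<longrightarrow> 5 \<le> k"
  proof (intro allI impI)
    fix k :: nat assume h: "0 < k \<and> (syracuse ^^ k) n mod 64 = 57"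
    show "5 \<le> k"
    proof (rule ccontr)
      assume "\<not> 5 \<le> k"
      then have "k \<in> {1..4}" using h by auto
      with A h show False by blast
    qed
  qed
  ultimately show ?thesis using n by blast
qed

end
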